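(* Let $k\ge 1$ and let $n\ge k-1$ be integers. Then the total number of standard Young tableaux of skew shape $\lambda/(k-1)$, summed over all partitions $\lambda$ of $n$ having at most three parts (and containing the one-row partition $(k-1)$), filled with the numbers $1,2,\ldots,n-k+1$, equals \[\sum_{i} r_{k,i}\, M_{i+n-k+1},\] where $M_m$ denotes the $m$th Motzkin number and the integers $r_{k,i}$ are defined by \[\sum_{k=1}^\infty r_k(x)y^k=\sum_{k=1}^\infty\sum_{i=0}^{k-1} r_{k,i}x^iy^k=\frac{y}{(1-y)\big(1+(1-x)y+y^2\big)}.\]
   Context: A partition $\lambda=(\lambda_1,\ldots,\lambda_l)$ of $n$ is a weakly decreasing sequence of positive integers summing to $n$; its parts are the $\lambda_i$. For partitions $\mu\subset\lambda$ (i.e. $\mu_i\le\lambda_i$ for all $i$), a standard Young tableau of skew shape $\lambda/\mu$ is a filling of the boxes of the Young diagram of $\lambda$ not in the Young diagram of $\mu$ with the numbers $1,2,\ldots,|\lambda|-|\mu|$, each used once, so that entries increase from left to right along rows and from top to bottom down columns. The Motzkin numbers are $M_m=\sum_{j=0}^{\lfloor m/2\rfloor}\frac{m!}{j!(j+1)!(m-2j)!}$, with generating function $\sum_{m\ge0}M_mx^m=\frac{1-x-\sqrt{1-2x-3x^2}}{2x^2}$. *)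

theory Defs
  imports Complex_Main "HOL-Computational_Algebra.Formal_Power_Series"
begin

definition is_partition :: "nat list \<Rightarrow> bool" where
  "is_partition lam \<longleftrightarrow> sorted_wrt (\<ge>) lam \<and> (\<forall>p \<in> set lam. 0 < p)"

definition partitions_at_most3 :: "nat \<Rightarrow> nat list set" where
  "partitions_at_most3 n = {lam. is_partition lam \<and> sum_list lam = n \<and> length lam \<le> 3}"

definition part_contains :: "nat list \<Rightarrow> nat list \<Rightarrow> bool" where
  "part_contains mu lam \<longleftrightarrow> length mu \<le> length lam \<and> (\<forall>i < length mu. mu ! i \<le> lam ! i)"

definition part :: "nat list \<Rightarrow> nat \<Rightarrow> nat" where
  "part lam i = (if i < length lam then lam ! i else 0)"

definition skew_boxes :: "nat list \<Rightarrow> nat list \<Rightarrow> (nat \<times> nat) set" where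
  "skew_boxes lam mu = {(i, j). i < length lam \<and> part mu i \<le> j \<and> j < part lam i}"

text \<open>Standard Young tableaux of skew shape lam/mu: bijective fillings of the boxes
  with 1..|lam|-|mu|, strictly increasing along rows and down columns
  (the filling is taken to be 0 outside the boxes, to make it unique).\<close>
definition skew_SYT :: "nat list \<Rightarrow> nat list \<Rightarrow> ((nat \<times> nat) \<Rightarrow> nat) set" where
  "skew_SYT lam mu = {T.
      bij_betw T (skew_boxes lam mu) {1..card (skew_boxes lam mu)} \<and>
      (\<forall>b. b \<notin> skew_boxes lam mu \<longrightarrow> T b = 0) \<and>
      (\<forall>i j j'. (i, j) \<in> skew_boxes lam mu \<and> (i, j') \<in> skew_boxes lam mu \<and> j < j'
               \<longrightarrow> T (i, j) < T (i, j')) \<and>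
      (\<forall>i i' j. (i, j) \<in> skew_boxes lam mu \<and> (i', j) \<in> skew_boxes lam mu \<and> i < i'
               \<longrightarrow> T (i, j) < T (i', j))}"

definition motzkin :: "nat \<Rightarrow> nat" where
  "motzkin m = (\<Sum>j = 0..m div 2. fact m div (fact j * fact (j + 1) * fact (m - 2 * j)))"

text \<open>The bivariate generating function y / ((1-y)(1+(1-x)y+y^2)) as a power series
  in y whose coefficients are power series in x.\<close>
definition r_gf :: "real fps fps" where
  "r_gf = fps_X * inverse ((1 - fps_X) * (1 + fps_const (1 - fps_X) * fps_X + fps_X ^ 2))"

definition r_coeff :: "nat \<Rightarrow> nat \<Rightarrow> real" where
  "r_coeff k i = fps_nth (fps_nth r_gf k) i"

end

theory Submission
  imports Defs "HOL-Computational_Algebra.Polynomial"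
begin


fun W :: "nat \<Rightarrow> nat \<Rightarrow> int" where
  "W e 0 = (if e = 0 then 1 else 0)"
| "W e (Suc i) = (if 0 < e then W (e - 1) i else 0) + W e i + W (Suc e) i"

definition catb :: "nat \<Rightarrow> nat \<Rightarrow> int" where
  "catb k e = int (e + 2*k choose k) - (if k = 0 then 0 else int (e + 2*k choose (k - 1)))"

lemma catb_rec:
  assumes "e \<noteq> 0 \<or> k \<noteq> 0"
  shows "catb k e = (if 0 < e then catb k (e - 1) else 0) + (if 0 < k then catb (k - 1) (Suc e) else 0)"
proof (cases k)
  case 0
  then show ?thesis using assms by (cases e) (auto simp: catb_def)
next
  case (Suc k')
  show ?thesis
  proof (cases e)
    case 0
    have s: "(2*k' + 1 choose Suc k') = (2*k'+1 choose k')"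
      using binomial_symmetric[of k' "2*k'+1"] by (simp add: numeral_2_eq_2)
    show ?thesis
    proof (cases k')
      case 0
      then show ?thesis using \<open>e = 0\<close> Suc by (simp add: catb_def)
    next
      case (Suc k'')
      have a: "(2*k'+2 choose Suc k') = (2*k'+1 choose k') + (2*k'+1 choose Suc k')"
        using binomial_Suc_Suc[of "2*k'+1" k'] by (simp del: binomial_Suc_Suc)
      have b: "(2*k'+2 choose k') = (2*k'+1 choose k'') + (2*k'+1 choose k')"
        using Suc binomial_Suc_Suc[of "2*k'+1" k''] by (simp del: binomial_Suc_Suc)
      show ?thesis using \<open>e = 0\<close> \<open>k = Suc k'\<close> Suc a b s
        by (simp add: catb_def algebra_simps)
    qed
  next
    case (Suc e')
    show ?thesis
    proof (cases k')
      case 0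
      have "(Suc e' + 2 choose 1) = Suc e' + 2" by simp
      then show ?thesis using \<open>e = Suc e'\<close> \<open>k = Suc k'\<close> 0 by (simp add: catb_def)
    next
      case (Suc k'')
      have a: "(Suc e' + 2 * k choose k) = (e' + 2*k choose k') + (e' + 2*k choose k)"
        using \<open>k = Suc k'\<close> by simp
      have b: "(Suc e' + 2 * k choose k') = (e' + 2*k choose k'') + (e' + 2*k choose k')"
        using \<open>k = Suc k'\<close> Suc by simp
      show ?thesis using \<open>e = Suc e'\<close> \<open>k = Suc k'\<close> Suc a b
        by (simp add: catb_def algebra_simps)
    qed
  qed
qed

definition Wc :: "nat \<Rightarrow> nat \<Rightarrow> int" where
  "Wc e i = (\<Sum>k\<le>i. int (i choose (e + 2*k)) * catb k e)"

lemma Wc_Suc: "Wc e (Suc i) = (if 0 < e then Wc (e - 1) i else 0) + Wc e i + Wc (Suc e) i"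
proof -
  define f where "f k = (if e + 2*k = 0 then 0 else int (i choose (e + 2*k - 1)) * catb k e)" for k
  have split: "int (Suc i choose (e + 2*k)) * catb k e = int (i choose (e + 2*k)) * catb k e + f k" for k
  proof (cases "e + 2*k")
    case 0 then show ?thesis by (simp add: f_def)
  next
    case (Suc m) then show ?thesis by (simp add: f_def algebra_simps)
  qed
  have "Wc e (Suc i) = (\<Sum>k\<le>Suc i. int (i choose (e + 2*k)) * catb k e) + (\<Sum>k\<le>Suc i. f k)"
    unfolding Wc_def by (simp add: split sum.distrib)
  also have "(\<Sum>k\<le>Suc i. int (i choose (e + 2*k)) * catb k e) = Wc e i"
    unfolding Wc_def by simp
  also have "(\<Sum>k\<le>Suc i. f k) = (\<Sum>k\<le>Suc i. (if 0 < e then int (i choose (e - 1 + 2*k)) * catb k (e - 1) else 0))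
        + (\<Sum>k\<le>Suc i. (if 0 < k then int (i choose (e + 2*k - 1)) * catb (k - 1) (Suc e) else 0))"
    unfolding sum.distrib[symmetric]
  proof (rule sum.cong[OF refl])
    fix k assume "k \<in> {..Suc i}"
    show "f k = (if 0 < e then int (i choose (e - 1 + 2*k)) * catb k (e - 1) else 0)
        + (if 0 < k then int (i choose (e + 2*k - 1)) * catb (k - 1) (Suc e) else 0)"
    proof (cases "e + 2*k = 0")
      case True then show ?thesis by (simp add: f_def)
    next
      case False
      then have "catb k e = (if 0 < e then catb k (e - 1) else 0) + (if 0 < k then catb (k - 1) (Suc e) else 0)"
        by (intro catb_rec) auto
      moreover have "0 < e \<Longrightarrow> e + 2*k - 1 = e - 1 + 2*k" by simp
      ultimately show ?thesis using False by (auto simp: f_def algebra_simps)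
    qed
  qed
  also have "(\<Sum>k\<le>Suc i. (if 0 < e then int (i choose (e - 1 + 2*k)) * catb k (e - 1) else 0))
      = (if 0 < e then Wc (e - 1) i else 0)"
    unfolding Wc_def by simp
  also have "(\<Sum>k\<le>Suc i. (if 0 < k then int (i choose (e + 2*k - 1)) * catb (k - 1) (Suc e) else 0))
      = Wc (Suc e) i"
    unfolding Wc_def sum.atMost_Suc_shift by simp
  finally show ?thesis by simp
qed

lemma W_Wc: "W e i = Wc e i"
proof (induction i arbitrary: e)
  case 0 then show ?case by (simp add: Wc_def catb_def)
next
  case (Suc i) then show ?case by (simp add: Wc_Suc)
qed

lemma cat_mult: "int (Suc k) * catb k 0 = int (2*k choose k)"
proof (cases k)
  case 0 then show ?thesis by (simp add: catb_def)
next
  case (Suc m)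
  have e1: "Suc m * (2*m+2 choose Suc m) = (2*m+2) * (2*m+1 choose m)"
    using Suc_times_binomial[of m "2*m+1"] by simp
  have e2: "(2*m+2 - m) * (2*m+2 choose m) = (2*m+2) * (2*m+1 choose m)"
    using binomial_absorb_comp[of "2*m+2" m] by simp
  have "2*m+2 - m = m + 2" by simp
  with e1 e2 have "(m+2) * (2*m+2 choose m) = Suc m * (2*m+2 choose Suc m)" by simp
  then have "int (m+2) * int (2*m+2 choose m) = int (Suc m) * int (2*m+2 choose Suc m)"
    by (metis of_nat_mult)
  then show ?thesis using Suc by (simp add: catb_def algebra_simps)
qed

lemma catb_nonneg: "0 \<le> catb k 0"
proof -
  have "0 \<le> int (Suc k) * catb k 0" using cat_mult[of k] by simp
  then show ?thesis by (simp add: zero_le_mult_iff)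
qed

lemma motzkin_term:
  assumes "2*k \<le> i"
  shows "int (fact i div (fact k * fact (k+1) * fact (i - 2*k))) = int (i choose (2*k)) * catb k 0"
proof -
  define c where "c = nat (catb k 0)"
  have cc: "int c = catb k 0" using catb_nonneg c_def by simp
  have ck: "Suc k * c = (2*k choose k)"
    using cat_mult[of k] cc by (metis of_nat_eq_iff of_nat_mult)
  have f1: "fact (2*k) * fact (i - 2*k) * (i choose (2*k)) = (fact i :: nat)"
    using binomial_fact_lemma[OF assms] by simp
  have f2: "fact k * fact k * (2*k choose k) = (fact (2*k) :: nat)"
    using binomial_fact_lemma[of k "2*k"] by (simp add: mult_2)
  have f3: "fact (k+1) = (Suc k) * (fact k :: nat)" by simp
  have "(fact i :: nat) = fact k * fact k * (Suc k * c) * fact (i - 2*k) * (i choose (2*k))"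
    by (simp only: f1[symmetric] f2[symmetric] ck)
  also have "\<dots> = ((i choose (2*k)) * c) * (fact k * fact (k+1) * fact (i - 2*k))"
    by (simp only: f3) (simp add: algebra_simps)
  finally have "(fact i :: nat) = ((i choose (2*k)) * c) * (fact k * fact (k+1) * fact (i - 2*k))" .
  then have "fact i div (fact k * fact (k+1) * fact (i - 2*k)) = (i choose (2*k)) * c"
    by (simp del: fact_Suc)
  then show ?thesis using cc by simp
qed

lemma W0_motzkin: "W 0 i = int (motzkin i)"
proof -
  have "W 0 i = (\<Sum>k\<le>i. int (i choose (2*k)) * catb k 0)"
    by (simp add: W_Wc Wc_def)
  also have "\<dots> = (\<Sum>k\<in>{0..i div 2}. int (i choose (2*k)) * catb k 0)"
    by (rule sum.mono_neutral_right) auto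
  also have "\<dots> = (\<Sum>k\<in>{0..i div 2}. int (fact i div (fact k * fact (k+1) * fact (i - 2*k))))"
    by (rule sum.cong[OF refl], subst motzkin_term) auto
  also have "\<dots> = int (motzkin i)" by (simp add: motzkin_def)
  finally show ?thesis .
qed



definition X :: "int poly" where "X = [:0, 1:]"

fun hn :: "nat \<Rightarrow> int poly" where
  "hn 0 = 1"
| "hn (Suc 0) = X"
| "hn (Suc (Suc 0)) = X^2 - X"
| "hn (Suc (Suc (Suc n))) = X * hn (Suc (Suc n)) - X * hn (Suc n) + hn n"

fun U :: "nat \<Rightarrow> int poly" where
  "U 0 = 1"
| "U (Suc 0) = X - 1"
| "U (Suc (Suc n)) = (X - 1) * U (Suc n) - U n"

lemma hn_U: "hn n = (\<Sum>d\<le>n. U d)"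
proof (induction n rule: less_induct)
  case (less n)
  show ?case
  proof (cases n)
    case 0 then show ?thesis by simp
  next
    case (Suc n1)
    show ?thesis
    proof (cases n1)
      case 0 then show ?thesis using Suc by simp
    next
      case (Suc n2)
      show ?thesis
      proof (cases n2)
        case 0 then show ?thesis using Suc \<open>n = Suc n1\<close> by (simp add: power2_eq_square algebra_simps)
      next
        case (Suc m)
        define S where "S = (\<Sum>d\<le>m. U d)"
        have nn: "n = Suc (Suc (Suc m))" using Suc \<open>n = Suc n1\<close> \<open>n1 = Suc n2\<close> by simp
        have a: "hn m = S" using less[of m] nn S_def by simp
        have b: "hn (Suc m) = S + U (Suc m)" using less[of "Suc m"] nn S_def by simp
        have c: "hn (Suc (Suc m)) = S + U (Suc m) + U (Suc (Suc m))" using less[of "Suc (Suc m)"] nn S_def by simp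
        have "hn n = X * (S + U (Suc m) + U (Suc (Suc m))) - X * (S + U (Suc m)) + S"
          by (simp only: nn hn.simps(4) a b c)
        also have "\<dots> = S + U (Suc m) + U (Suc (Suc m)) + ((X - 1) * U (Suc (Suc m)) - U (Suc m))"
          by (simp add: algebra_simps)
        also have "\<dots> = (\<Sum>d\<le>n. U d)"
          by (simp only: nn sum.atMost_Suc S_def U.simps(3))
        finally show ?thesis .
      qed
    qed
  qed
qed

definition K :: "nat \<Rightarrow> int poly \<Rightarrow> int" where
  "K e f = (\<Sum>i\<le>degree f. coeff f i * W e i)"

lemma K_bound: "degree f \<le> D \<Longrightarrow> K e f = (\<Sum>i\<le>D. coeff f i * W e i)"
  unfolding K_def by (rule sum.mono_neutral_left) (auto simp: coeff_eq_0)

lemma K_add: "K e (f + g) = K e f + K e g"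
proof -
  let ?D = "max (degree f) (degree g)"
  have "K e (f + g) = (\<Sum>i\<le>?D. coeff (f + g) i * W e i)"
    by (rule K_bound) (simp add: degree_add_le)
  moreover have "K e f = (\<Sum>i\<le>?D. coeff f i * W e i)" by (rule K_bound) simp
  moreover have "K e g = (\<Sum>i\<le>?D. coeff g i * W e i)" by (rule K_bound) simp
  ultimately show ?thesis by (simp add: sum.distrib algebra_simps)
qed

lemma K_minus: "K e (- f) = - K e f"
  unfolding K_def by (simp add: sum_negf)

lemma K_diff: "K e (f - g) = K e f - K e g"
  using K_add[of e f "-g"] by (simp add: K_minus)

lemma K_zero[simp]: "K e 0 = 0" by (simp add: K_def)

lemma K_sum: "K e (\<Sum>d\<in>A. f d) = (\<Sum>d\<in>A. K e (f d))"
  by (induction A rule: infinite_finite_induct) (auto simp: K_add)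

lemma K_one: "K e 1 = (if e = 0 then 1 else 0)"
  by (simp add: K_def)

lemma X_mult: "X * f = pCons 0 f"
  by (simp add: X_def)

lemma K_X_mult: "K e (X * f) = (if 0 < e then K (e - 1) f else 0) + K e f + K (Suc e) f"
proof -
  have "K e (X * f) = (\<Sum>i\<le>Suc (degree f). coeff (pCons 0 f) i * W e i)"
    unfolding X_mult by (rule K_bound) (simp add: degree_pCons_le)
  also have "\<dots> = (\<Sum>i\<le>degree f. coeff f i * W e (Suc i))"
    by (simp only: sum.atMost_Suc_shift) simp
  also have "\<dots> = (\<Sum>i\<le>degree f. (if 0 < e then coeff f i * W (e - 1) i else 0) + coeff f i * W e i + coeff f i * W (Suc e) i)"
    by (rule sum.cong) (auto simp: algebra_simps)
  finally show ?thesis by (simp add: K_def sum.distrib)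
qed

lemma K_X: "K e X = (if e \<le> 1 then 1 else 0)"
  using K_X_mult[of e 1] by (cases e) (simp_all add: K_one)

lemma K_U: "K e (U d) = (if e = d then 1 else 0)"
proof (induction d arbitrary: e rule: U.induct)
  case 1 then show ?case by (simp add: K_one)
next
  case 2 then show ?case by (simp add: K_diff K_X K_one)
next
  case (3 n)
  have "K e (U (Suc (Suc n))) = K e (X * U (Suc n)) - K e (U (Suc n)) - K e (U n)"
    by (simp add: algebra_simps K_diff K_add)
  then show ?case using 3 by (cases e) (auto simp: K_X_mult)
qed

lemma K0_U_mult: "K 0 (U d * f) = K d f"
proof (induction d arbitrary: f rule: U.induct)
  case 1 then show ?case by simp
next
  case 2
  have "K 0 ((X - 1) * f) = K 0 (X * f) - K 0 f" by (simp add: algebra_simps K_diff)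
  then show ?case by (simp add: K_X_mult)
next
  case (3 n)
  have "K 0 (U (Suc (Suc n)) * f) = K 0 (U (Suc n) * (X * f)) - K 0 (U (Suc n) * f) - K 0 (U n * f)"
    by (simp add: algebra_simps K_diff K_add)
  then show ?case using 3 by (simp add: K_X_mult K_add)
qed

lemma K0_hh: "K 0 (hn a * hn b) = int (min a b) + 1"
proof -
  have "K 0 (hn a * hn b) = (\<Sum>d\<le>a. K d (hn b))"
    by (simp add: hn_U[of a] sum_distrib_right K_sum K0_U_mult)
  also have "\<dots> = (\<Sum>d\<le>a. if d \<le> b then 1 else 0)"
    by (simp add: hn_U[of b] K_sum K_U)
  also have "\<dots> = int (card {d. d \<le> a \<and> d \<le> b})"
    by (simp add: sum.If_cases Int_def)
  also have "{d. d \<le> a \<and> d \<le> b} = {..min a b}" by auto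
  finally show ?thesis by simp
qed



definition hi :: "int \<Rightarrow> int poly" where
  "hi n = (if n < 0 then 0 else hn (nat n))"

lemma hi_rec:
  assumes "1 \<le> n"
  shows "hi n = X * hi (n - 1) - X * hi (n - 2) + hi (n - 3)"
proof -
  consider "n = 1" | "n = 2" | "3 \<le> n" using assms by linarith
  then show ?thesis
  proof cases
    case 1 then show ?thesis by (simp add: hi_def)
  next
    case 2
    have "hn 2 = X^2 - X" by (simp add: numeral_2_eq_2)
    then show ?thesis using 2 by (simp add: hi_def power2_eq_square algebra_simps)
  next
    case 3
    define m where "m = nat (n - 3)"
    have nn: "nat n = Suc (Suc (Suc m))" "nat (n - 1) = Suc (Suc m)" "nat (n - 2) = Suc m" "nat (n - 3) = m"
      using 3 m_def by auto
    show ?thesis using 3 by (simp add: hi_def nn)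
  qed
qed

definition Pol :: "int \<Rightarrow> int \<Rightarrow> int poly" where
  "Pol a b = hi a * hi b - hi (a + 1) * hi (b - 1)"

lemma Pieri:
  assumes "0 \<le> a" "0 \<le> b"
  shows "X * Pol a b = Pol (a + 1) b + Pol a (b + 1) + Pol (a - 1) (b - 1)"
proof -
  have hb: "1 \<le> b + 1" and ha: "1 \<le> a + 2" using assms by simp_all
  have eb: "b + 1 - 1 = b" "b + 1 - 2 = b - 1" "b + 1 - 3 = b - 2" by simp_all
  have ea: "a + 2 - 1 = a + 1" "a + 2 - 2 = a" "a + 2 - 3 = a - 1" by simp_all
  have r1: "hi (b + 1) = X * hi b - X * hi (b - 1) + hi (b - 2)"
    using hi_rec[OF hb] by (simp only: eb)
  have r2: "hi (a + 2) = X * hi (a + 1) - X * hi a + hi (a - 1)"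
    using hi_rec[OF ha] by (simp only: ea)
  have e1: "Pol (a + 1) b = hi (a + 1) * hi b - hi (a + 2) * hi (b - 1)"
    by (simp add: Pol_def add.assoc)
  have e2: "Pol a (b + 1) = hi a * hi (b + 1) - hi (a + 1) * hi b"
    by (simp add: Pol_def)
  have e3: "Pol (a - 1) (b - 1) = hi (a - 1) * hi (b - 1) - hi a * hi (b - 2)"
    by (simp add: Pol_def)
  show ?thesis unfolding e1 e2 e3 unfolding Pol_def unfolding r1 r2 by (simp add: algebra_simps)
qed

lemma hi_nat: "hi (int n) = hn n" by (simp add: hi_def)

lemma K0_Pol:
  assumes "0 \<le> b" "b \<le> a"
  shows "K 0 (Pol a b) = 1"
proof -
  obtain a' b' where ab: "a = int a'" "b = int b'" using assms
    by (metis nonneg_int_cases order_trans)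
  have le: "b' \<le> a'" using assms ab by simp
  show ?thesis
  proof (cases b')
    case 0
    have "K 0 (Pol a b) = K 0 (hn a' * hn 0)" using ab 0 by (simp add: Pol_def hi_def)
    then show ?thesis using K0_hh[of a' 0] by simp
  next
    case (Suc c)
    have n1: "nat (int a' + 1) = Suc a'" "nat (1 + int c) = Suc c" by simp_all
    have "Pol a b = hn a' * hn b' - hn (Suc a') * hn c"
      using ab Suc by (simp add: Pol_def hi_def n1)
    then have "K 0 (Pol a b) = K 0 (hn a' * hn b') - K 0 (hn (Suc a') * hn c)"
      by (simp add: K_diff)
    then show ?thesis using le Suc by (simp add: K0_hh)
  qed
qed

definition valid :: "(nat \<Rightarrow> nat) \<Rightarrow> bool" where
  "valid s \<longleftrightarrow> s 1 \<le> s 0 \<and> s 2 \<le> s 1 \<and> (\<forall>i\<ge>3. s i = 0)"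

definition addb :: "(nat \<Rightarrow> nat) \<Rightarrow> nat \<Rightarrow> nat \<Rightarrow> nat" where
  "addb s i = s(i := Suc (s i))"

definition PolS :: "(nat \<Rightarrow> nat) \<Rightarrow> int poly" where
  "PolS s = Pol (int (s 0) - int (s 2)) (int (s 1) - int (s 2))"

fun G :: "nat \<Rightarrow> (nat \<Rightarrow> nat) \<Rightarrow> nat" where
  "G 0 s = 1"
| "G (Suc N) s = (\<Sum>i<3. if valid (addb s i) then G N (addb s i) else 0)"

lemma sum3: "(\<Sum>i<3. f i) = f 0 + f 1 + f (2::nat)"
  by (simp add: numeral_3_eq_3 numeral_2_eq_2)

lemma valid_addb0: "valid s \<Longrightarrow> valid (addb s 0)"
  by (auto simp: valid_def addb_def)
lemma valid_addb1: "valid s \<Longrightarrow> valid (addb s 1) \<longleftrightarrow> s 1 < s 0"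
  by (auto simp: valid_def addb_def)
lemma valid_addb2: "valid s \<Longrightarrow> valid (addb s 2) \<longleftrightarrow> s 2 < s 1"
  by (auto simp: valid_def addb_def)

lemma PieriS:
  assumes "valid s"
  shows "X * PolS s = (\<Sum>i<3. if valid (addb s i) then PolS (addb s i) else 0)"
proof -
  define a where "a = int (s 0) - int (s 2)"
  define b where "b = int (s 1) - int (s 2)"
  have ab: "0 \<le> b" "b \<le> a" using assms by (auto simp: valid_def a_def b_def)
  have p0: "PolS (addb s 0) = Pol (a + 1) b" unfolding PolS_def addb_def
    by (rule arg_cong2[where f=Pol]) (simp_all add: a_def b_def)
  have p1: "PolS (addb s 1) = Pol a (b + 1)" unfolding PolS_def addb_def
    by (rule arg_cong2[where f=Pol]) (simp_all add: a_def b_def)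
  have p2: "PolS (addb s 2) = Pol (a - 1) (b - 1)" unfolding PolS_def addb_def
    by (rule arg_cong2[where f=Pol]) (simp_all add: a_def b_def)
  have z1: "\<not> s 1 < s 0 \<Longrightarrow> Pol a (b + 1) = 0"
    using assms by (simp add: valid_def a_def b_def Pol_def)
  have z2: "\<not> s 2 < s 1 \<Longrightarrow> Pol (a - 1) (b - 1) = 0"
    using assms by (simp add: valid_def a_def b_def Pol_def hi_def)
  have "X * PolS s = Pol (a + 1) b + Pol a (b + 1) + Pol (a - 1) (b - 1)"
    using Pieri[of a b] ab by (simp add: PolS_def a_def b_def)
  moreover have "(\<Sum>i<3. if valid (addb s i) then PolS (addb s i) else 0) =
     (if valid (addb s 0) then PolS (addb s 0) else 0) + (if valid (addb s 1) then PolS (addb s 1) else 0)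
      + (if valid (addb s 2) then PolS (addb s 2) else 0)" by (rule sum3)
  moreover note v = valid_addb0[OF assms] valid_addb1[OF assms] valid_addb2[OF assms]
  ultimately show ?thesis
    by (cases "s 1 < s 0"; cases "s 2 < s 1"; simp add: v p0 p1 p2 z1 z2 p1[unfolded One_nat_def])
qed

lemma K_if: "K e (if c then f else 0) = (if c then K e f else 0)" by simp

lemma G_K: "valid s \<Longrightarrow> int (G N s) = K 0 (X^N * PolS s)"
proof (induction N arbitrary: s)
  case 0
  then show ?case
    by (simp add: PolS_def valid_def K0_Pol)
next
  case (Suc N)
  have "K 0 (X^Suc N * PolS s) = K 0 (X^N * (X * PolS s))" by (simp add: algebra_simps)
  also have "\<dots> = (\<Sum>i<3. if valid (addb s i) then K 0 (X^N * PolS (addb s i)) else 0)"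
    unfolding PieriS[OF Suc.prems] sum_distrib_left K_sum
    by (rule sum.cong) auto
  also have "\<dots> = (\<Sum>i<3. if valid (addb s i) then int (G N (addb s i)) else 0)"
    by (rule sum.cong) (auto simp: Suc.IH)
  moreover have "int (G (Suc N) s) = (\<Sum>i<3. if valid (addb s i) then int (G N (addb s i)) else 0)"
    by (auto simp: of_nat_sum intro!: sum.cong)
  ultimately show ?case by simp
qed



definition boxes :: "(nat \<Rightarrow> nat) \<Rightarrow> (nat \<Rightarrow> nat) \<Rightarrow> (nat \<times> nat) set" where
  "boxes l m = {(i, j). m i \<le> j \<and> j < l i}"

definition SYT :: "(nat \<Rightarrow> nat) \<Rightarrow> (nat \<Rightarrow> nat) \<Rightarrow> ((nat \<times> nat) \<Rightarrow> nat) set" where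
  "SYT l m = {T.
      bij_betw T (boxes l m) {1..card (boxes l m)} \<and>
      (\<forall>b. b \<notin> boxes l m \<longrightarrow> T b = 0) \<and>
      (\<forall>i j j'. (i, j) \<in> boxes l m \<and> (i, j') \<in> boxes l m \<and> j < j'
               \<longrightarrow> T (i, j) < T (i, j')) \<and>
      (\<forall>i i' j. (i, j) \<in> boxes l m \<and> (i', j) \<in> boxes l m \<and> i < i'
               \<longrightarrow> T (i, j) < T (i', j))}"

definition contained :: "(nat \<Rightarrow> nat) \<Rightarrow> (nat \<Rightarrow> nat) \<Rightarrow> bool" where
  "contained m l \<longleftrightarrow> (\<forall>i. m i \<le> l i)"

definition ssize :: "(nat \<Rightarrow> nat) \<Rightarrow> nat" where
  "ssize s = s 0 + s 1 + s 2"

lemma valid_mono: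
  assumes "valid s" "i \<le> j"
  shows "s j \<le> s i"
proof -
  have "j \<ge> 3 \<or> j = 0 \<or> j = 1 \<or> j = 2" by arith
  moreover have "i = 0 \<or> i = 1 \<or> i = 2 \<or> i \<ge> 3" by arith
  ultimately show ?thesis using assms by (auto simp: valid_def)
qed

lemma valid_pos: "valid s \<Longrightarrow> 0 < s i \<Longrightarrow> i < 3"
  by (metis not_less less_irrefl valid_def)

lemma finite_boxes:
  assumes "valid l"
  shows "finite (boxes l m)"
proof -
  have "boxes l m \<subseteq> {..<3} \<times> {..<l 0}"
    using assms valid_mono[OF assms, of 0] valid_pos[OF assms]
    by (auto simp: boxes_def) (meson le0 less_le_trans valid_mono[OF assms])
  then show ?thesis by (rule finite_subset) simp
qed

lemma finite_SYT:
  assumes "valid l"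
  shows "finite (SYT l m)"
proof -
  let ?B = "boxes l m"
  have "SYT l m \<subseteq> {f. \<forall>x. (x \<in> ?B \<longrightarrow> f x \<in> {1..card ?B}) \<and> (x \<notin> ?B \<longrightarrow> f x = 0)}"
    by (auto simp: SYT_def bij_betw_def)
  moreover have "finite {f. \<forall>x. (x \<in> ?B \<longrightarrow> f x \<in> {1..card ?B}) \<and> (x \<notin> ?B \<longrightarrow> f x = (0::nat))}"
    by (rule finite_set_of_finite_funs) (simp_all add: finite_boxes[OF assms])
  ultimately show ?thesis by (rule finite_subset)
qed

lemma SYT_same: "SYT m m = {\<lambda>_. 0}"
proof -
  have "boxes m m = {}" by (auto simp: boxes_def)
  then show ?thesis by (auto simp: SYT_def bij_betw_def)
qed

lemma boxes_addb:
  assumes "m i < l i"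
  shows "boxes l (addb m i) = boxes l m - {(i, m i)}"
  using assms by (auto simp: boxes_def addb_def split: if_splits)

lemma SYT_pos:
  "T \<in> SYT l m \<Longrightarrow> b \<in> boxes l m \<Longrightarrow> 1 \<le> T b \<and> T b \<le> card (boxes l m)"
  unfolding SYT_def bij_betw_def by auto



definition Psi :: "(nat \<Rightarrow> nat) \<Rightarrow> (nat \<Rightarrow> nat) \<Rightarrow> nat \<Rightarrow> ((nat \<times> nat) \<Rightarrow> nat) \<Rightarrow> ((nat \<times> nat) \<Rightarrow> nat)" where
  "Psi l m i T = (\<lambda>b. if b = (i, m i) then 1 else if b \<in> boxes l (addb m i) then Suc (T b) else 0)"

lemma addb_same: "addb m i i = Suc (m i)" by (simp add: addb_def)
lemma addb_other: "k \<noteq> i \<Longrightarrow> addb m i k = m k" by (simp add: addb_def)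

lemma Psi_SYT:
  assumes vl: "valid l" and vm: "valid m" and vi: "valid (addb m i)"
    and ct: "contained (addb m i) l" and T: "T \<in> SYT l (addb m i)"
  shows "Psi l m i T \<in> SYT l m"
proof -
  let ?B = "boxes l m" and ?B' = "boxes l (addb m i)" and ?c = "(i, m i)"
  define P where "P = Psi l m i T"
  have mi: "m i < l i" using ct by (auto simp: contained_def addb_def dest: spec[of _ i])
  have BB: "?B' = ?B - {?c}" using boxes_addb[of m i l] mi by simp
  have cB: "?c \<in> ?B" using mi by (simp add: boxes_def)
  have Bins: "?B = insert ?c ?B'" using BB cB by blast
  have cnB': "?c \<notin> ?B'" using BB by blast
  have fin: "finite ?B'" using finite_boxes[OF vl] by blast
  have cardB: "card ?B = Suc (card ?B')" using Bins cnB' fin by simp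
  have Tpos: "\<And>b. b \<in> ?B' \<Longrightarrow> 1 \<le> T b \<and> T b \<le> card ?B'" using SYT_pos[OF T] by blast
  have Tbij: "bij_betw T ?B' {1..card ?B'}" using T by (simp add: SYT_def)
  have Trow: "\<And>i j j'. (i, j) \<in> ?B' \<Longrightarrow> (i, j') \<in> ?B' \<Longrightarrow> j < j' \<Longrightarrow> T (i, j) < T (i, j')"
    using T by (simp add: SYT_def)
  have Tcol: "\<And>i i' j. (i, j) \<in> ?B' \<Longrightarrow> (i', j) \<in> ?B' \<Longrightarrow> i < i' \<Longrightarrow> T (i, j) < T (i', j)"
    using T by (simp add: SYT_def)
  have Pc: "P ?c = 1" by (simp add: P_def Psi_def)
  have PB': "\<And>b. b \<in> ?B' \<Longrightarrow> P b = Suc (T b)" using cnB' by (auto simp: P_def Psi_def)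
  have PnB: "\<And>b. b \<notin> ?B \<Longrightarrow> P b = 0" using Bins by (auto simp: P_def Psi_def)
  have inj: "inj_on P ?B"
  proof (rule inj_onI)
    fix x y assume x: "x \<in> ?B" and y: "y \<in> ?B" and eq: "P x = P y"
    show "x = y"
    proof (cases "x = ?c")
      case True
      show ?thesis
      proof (rule ccontr)
        assume "x \<noteq> y"
        then have yB: "y \<in> ?B'" using y True Bins by auto
        then show False using eq True Pc PB'[OF yB] Tpos[OF yB] by simp
      qed
    next
      case False
      then have xB: "x \<in> ?B'" using x Bins by auto
      show ?thesis
      proof (cases "y = ?c")
        case True then show ?thesis using eq Pc PB'[OF xB] Tpos[OF xB] by simp
      next
        case False
        then have "y \<in> ?B'" using y Bins by auto
        then show ?thesis using xB eq PB' Tbij by (auto simp: bij_betw_def inj_on_def)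
      qed
    qed
  qed
  have "P ` ?B = insert 1 (Suc ` (T ` ?B'))"
    using Bins Pc PB' by (auto simp: image_image)
  also have "\<dots> = {1..card ?B}"
    using Tbij cardB by (auto simp: bij_betw_def image_Suc_atLeastAtMost)
  finally have bij: "bij_betw P ?B {1..card ?B}" using inj by (simp add: bij_betw_def)
  have row: "\<forall>i j j'. (i, j) \<in> ?B \<and> (i, j') \<in> ?B \<and> j < j' \<longrightarrow> P (i, j) < P (i, j')"
  proof (intro allI impI)
    fix i1 j j' assume a: "(i1, j) \<in> ?B \<and> (i1, j') \<in> ?B \<and> j < j'"
    have "(i1, j') \<noteq> ?c" using a by (auto simp: boxes_def)
    then have j'B: "(i1, j') \<in> ?B'" using a Bins by auto
    show "P (i1, j) < P (i1, j')"
    proof (cases "(i1, j) = ?c")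
      case True then show ?thesis using Pc PB'[OF j'B] Tpos[OF j'B] by simp
    next
      case False
      then have "(i1, j) \<in> ?B'" using a Bins by auto
      then show ?thesis using j'B a Trow PB' by auto
    qed
  qed
  have col: "\<forall>i i' j. (i, j) \<in> ?B \<and> (i', j) \<in> ?B \<and> i < i' \<longrightarrow> P (i, j) < P (i', j)"
  proof (intro allI impI)
    fix i1 i2 j assume a: "(i1, j) \<in> ?B \<and> (i2, j) \<in> ?B \<and> i1 < i2"
    have "(i2, j) \<noteq> ?c"
    proof
      assume e: "(i2, j) = ?c"
      then have i2: "i2 = i" "j = m i" by auto
      have "addb m i i \<le> addb m i (i - 1)" using valid_mono[OF vi, of "i - 1" i] by simp
      moreover have "i - 1 \<noteq> i" using a i2 by linarith
      ultimately have s1: "Suc (m i) \<le> m (i - 1)" by (simp add: addb_same addb_other)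
      have "i1 \<le> i - 1" using a i2 by linarith
      then have s2: "m (i - 1) \<le> m i1" using valid_mono[OF vm, of i1 "i - 1"] by simp
      have s3: "m i1 \<le> m i" using a i2 by (simp add: boxes_def)
      show False using s1 s2 s3 by simp
    qed
    then have i2B: "(i2, j) \<in> ?B'" using a Bins by auto
    show "P (i1, j) < P (i2, j)"
    proof (cases "(i1, j) = ?c")
      case True then show ?thesis using Pc PB'[OF i2B] Tpos[OF i2B] by simp
    next
      case False
      then have "(i1, j) \<in> ?B'" using a Bins by auto
      then show ?thesis using i2B a Tcol PB' by auto
    qed
  qed
  show ?thesis unfolding P_def[symmetric] SYT_def using bij PnB row col by blast
qed

lemma valid_addbI:
  assumes "valid m" "i < 3" "1 \<le> i \<Longrightarrow> m i < m (i - 1)"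
  shows "valid (addb m i)"
proof -
  have "i = 0 \<or> i = 1 \<or> i = 2" using assms(2) by arith
  then show ?thesis using assms by (auto simp: valid_def addb_def)
qed

lemma c_notin: "(i, m i) \<notin> boxes l (addb m i)"
  by (simp add: boxes_def addb_def)

lemma SYT_decomp:
  assumes vl: "valid l" and vm: "valid m" and cml: "contained m l"
    and T: "T \<in> SYT l m" and ne: "boxes l m \<noteq> {}"
  shows "\<exists>i. i < 3 \<and> valid (addb m i) \<and> contained (addb m i) l \<and>
     (\<lambda>b. if b \<in> boxes l (addb m i) then T b - 1 else 0) \<in> SYT l (addb m i) \<and>
     Psi l m i (\<lambda>b. if b \<in> boxes l (addb m i) then T b - 1 else 0) = T"
proof -
  let ?B = "boxes l m"
  have fin: "finite ?B" by (rule finite_boxes[OF vl])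
  have Tbij: "bij_betw T ?B {1..card ?B}" using T by (simp add: SYT_def)
  have Tz: "\<And>b. b \<notin> ?B \<Longrightarrow> T b = 0" using T unfolding SYT_def by blast
  have Trow: "\<And>i j j'. (i, j) \<in> ?B \<Longrightarrow> (i, j') \<in> ?B \<Longrightarrow> j < j' \<Longrightarrow> T (i, j) < T (i, j')"
    using T by (simp add: SYT_def)
  have Tcol: "\<And>i i' j. (i, j) \<in> ?B \<Longrightarrow> (i', j) \<in> ?B \<Longrightarrow> i < i' \<Longrightarrow> T (i, j) < T (i', j)"
    using T by (simp add: SYT_def)
  have Tpos: "\<And>b. b \<in> ?B \<Longrightarrow> 1 \<le> T b" using SYT_pos[OF T] by blast
  have "card ?B \<ge> 1" using fin ne by (simp add: Suc_le_eq card_gt_0_iff)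
  then have "1 \<in> T ` ?B" using Tbij by (simp add: bij_betw_def)
  then obtain i j where cB: "(i, j) \<in> ?B" and T1: "T (i, j) = 1" by auto
  have j: "j = m i"
  proof (rule ccontr)
    assume "j \<noteq> m i"
    then have "m i < j" using cB by (simp add: boxes_def)
    then have "(i, j - 1) \<in> ?B" using cB by (auto simp: boxes_def)
    then have "T (i, j - 1) < T (i, j)" "1 \<le> T (i, j - 1)" using Trow[of i "j - 1" j] cB \<open>m i < j\<close> Tpos by auto
    then show False using T1 by simp
  qed
  have mi: "m i < l i" using cB j by (simp add: boxes_def)
  have i3: "i < 3" using valid_pos[OF vl, of i] mi by simp
  have lt: "m i < m (i - 1)" if "1 \<le> i"
  proof (rule ccontr)
    assume "\<not> m i < m (i - 1)"
    then have le: "m (i - 1) \<le> m i" by simp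
    have "l i \<le> l (i - 1)" using valid_mono[OF vl, of "i - 1" i] by simp
    then have "(i - 1, m i) \<in> ?B" using le mi by (simp add: boxes_def)
    then have "T (i - 1, m i) < T (i, m i)" "1 \<le> T (i - 1, m i)" using Tcol[of "i - 1" "m i" i] cB j that Tpos by auto
    then show False using T1 j by simp
  qed
  have vi: "valid (addb m i)" by (rule valid_addbI[OF vm i3 lt])
  have ci: "contained (addb m i) l" using cml mi by (auto simp: contained_def addb_def)
  define T' where "T' = (\<lambda>b. if b \<in> boxes l (addb m i) then T b - 1 else 0)"
  let ?B' = "boxes l (addb m i)" and ?c = "(i, m i)"
  have BB: "?B' = ?B - {?c}" using boxes_addb[of m i l] mi by simp
  have cardB': "card ?B' = card ?B - 1" using BB fin cB j by simp
  have Tinj: "inj_on T ?B" using Tbij by (simp add: bij_betw_def)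
  have TB: "T ` ?B = {1..card ?B}" using Tbij by (simp add: bij_betw_def)
  have "T ` ?B' = T ` ?B - T ` {?c}"
    unfolding BB by (rule inj_on_image_set_diff[OF Tinj]) (use cB j in auto)
  also have "\<dots> = {2..card ?B}" using TB T1 j by auto
  also have "\<dots> = Suc ` {1..card ?B'}" using cardB' \<open>card ?B \<ge> 1\<close> by (simp add: image_Suc_atLeastAtMost)
  finally have TB': "T ` ?B' = Suc ` {1..card ?B'}" .
  have T'B: "\<And>b. b \<in> ?B' \<Longrightarrow> T' b = T b - 1" by (simp add: T'_def)
  have sub: "?B' \<subseteq> ?B" using BB by blast
  have inj': "inj_on T' ?B'"
  proof (rule inj_onI)
    fix x y assume x: "x \<in> ?B'" and y: "y \<in> ?B'" and e: "T' x = T' y"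
    have "1 \<le> T x" "1 \<le> T y" using Tpos[of x] Tpos[of y] x y sub by auto
    then have "T x = T y" using e T'B[OF x] T'B[OF y] by linarith
    then show "x = y" using Tinj x y sub by (auto simp: inj_on_def)
  qed
  have "T' ` ?B' = (\<lambda>x. x - 1) ` (T ` ?B')" using T'B by (auto simp: image_image)
  also have "\<dots> = {1..card ?B'}" unfolding TB' image_image by simp
  finally have bij': "bij_betw T' ?B' {1..card ?B'}" using inj' by (simp add: bij_betw_def)
  have T'SYT: "T' \<in> SYT l (addb m i)"
    unfolding SYT_def
  proof (intro CollectI conjI allI impI)
    show "bij_betw T' ?B' {1..card ?B'}" by (rule bij')
  next
    fix b assume "b \<notin> ?B'" then show "T' b = 0" by (simp add: T'_def)
  next
    fix i1 j1 j2 assume a: "(i1, j1) \<in> ?B' \<and> (i1, j2) \<in> ?B' \<and> j1 < j2"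
    then have "T (i1, j1) < T (i1, j2)" "1 \<le> T (i1, j1)" using Trow Tpos sub by blast+
    then show "T' (i1, j1) < T' (i1, j2)" using a by (simp add: T'_def)
  next
    fix i1 i2 j1 assume a: "(i1, j1) \<in> ?B' \<and> (i2, j1) \<in> ?B' \<and> i1 < i2"
    then have "T (i1, j1) < T (i2, j1)" "1 \<le> T (i1, j1)" using Tcol Tpos sub by blast+
    then show "T' (i1, j1) < T' (i2, j1)" using a by (simp add: T'_def)
  qed
  have "Psi l m i T' = T"
  proof
    fix b
    show "Psi l m i T' b = T b"
    proof (cases "b = ?c")
      case True then show ?thesis using T1 j by (simp add: Psi_def)
    next
      case False
      show ?thesis
      proof (cases "b \<in> ?B'")
        case True
        then show ?thesis using False Tpos[of b] sub by (auto simp: Psi_def T'_def)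
      next
        case nb: False
        then have "b \<notin> ?B" using BB False by blast
        then show ?thesis using False nb Tz by (simp add: Psi_def)
      qed
    qed
  qed
  then show ?thesis using i3 vi ci T'SYT unfolding T'_def by blast
qed

lemma Psi_inj:
  assumes T1: "T1 \<in> SYT l (addb m i1)" and T2: "T2 \<in> SYT l (addb m i2)"
    and e: "Psi l m i1 T1 = Psi l m i2 T2"
  shows "i1 = i2 \<and> T1 = T2"
proof -
  have p1: "\<And>b. b \<in> boxes l (addb m i1) \<Longrightarrow> 1 \<le> T1 b" using SYT_pos[OF T1] by blast
  have "Psi l m i2 T2 (i2, m i2) = 1" by (simp add: Psi_def)
  then have v: "Psi l m i1 T1 (i2, m i2) = 1" using e by simp
  have ii: "i1 = i2"
  proof (rule ccontr)
    assume "i1 \<noteq> i2"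
    then have "(i2, m i2) \<noteq> (i1, m i1)" by simp
    then show False using v p1[of "(i2, m i2)"] by (auto simp: Psi_def split: if_splits)
  qed
  have z1: "\<And>b. b \<notin> boxes l (addb m i1) \<Longrightarrow> T1 b = 0" using T1 unfolding SYT_def by blast
  have z2: "\<And>b. b \<notin> boxes l (addb m i1) \<Longrightarrow> T2 b = 0" using T2 ii unfolding SYT_def by blast
  have "T1 = T2"
  proof
    fix b
    show "T1 b = T2 b"
    proof (cases "b \<in> boxes l (addb m i1)")
      case True
      then have "b \<noteq> (i1, m i1)" using c_notin by blast
      then have "Psi l m i1 T1 b = Suc (T1 b)" "Psi l m i1 T2 b = Suc (T2 b)" using True by (simp_all add: Psi_def)
      then show ?thesis using e ii by simp
    next
      case False then show ?thesis using z1 z2 by simp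
    qed
  qed
  then show ?thesis using ii by simp
qed

lemma card_SYT_rec:
  assumes vl: "valid l" and vm: "valid m" and cml: "contained m l" and ne: "boxes l m \<noteq> {}"
  shows "card (SYT l m) = (\<Sum>i<3. if valid (addb m i) \<and> contained (addb m i) l then card (SYT l (addb m i)) else 0)"
proof -
  define I where "I = {i \<in> {..<3::nat}. valid (addb m i) \<and> contained (addb m i) l}"
  have bij: "bij_betw (\<lambda>(i, T). Psi l m i T) (SIGMA i:I. SYT l (addb m i)) (SYT l m)"
    unfolding bij_betw_def
  proof
    show "inj_on (\<lambda>(i, T). Psi l m i T) (SIGMA i:I. SYT l (addb m i))"
      by (rule inj_onI) (use Psi_inj in auto)
  next
    show "(\<lambda>(i, T). Psi l m i T) ` (SIGMA i:I. SYT l (addb m i)) = SYT l m"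
    proof
      show "(\<lambda>(i, T). Psi l m i T) ` (SIGMA i:I. SYT l (addb m i)) \<subseteq> SYT l m"
        using Psi_SYT[OF vl vm] by (auto simp: I_def)
    next
      show "SYT l m \<subseteq> (\<lambda>(i, T). Psi l m i T) ` (SIGMA i:I. SYT l (addb m i))"
      proof
        fix T assume "T \<in> SYT l m"
        from SYT_decomp[OF vl vm cml this ne] obtain i where
          i: "i < 3" "valid (addb m i)" "contained (addb m i) l"
          "(\<lambda>b. if b \<in> boxes l (addb m i) then T b - 1 else 0) \<in> SYT l (addb m i)"
          "Psi l m i (\<lambda>b. if b \<in> boxes l (addb m i) then T b - 1 else 0) = T" by blast
        then show "T \<in> (\<lambda>(i, T). Psi l m i T) ` (SIGMA i:I. SYT l (addb m i))"
          unfolding I_def by (intro image_eqI[where x="(i, (\<lambda>b. if b \<in> boxes l (addb m i) then T b - 1 else 0))"]) auto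
      qed
    qed
  qed
  have "card (SYT l m) = card (SIGMA i:I. SYT l (addb m i))" using bij_betw_same_card[OF bij] by simp
  also have "\<dots> = (\<Sum>i\<in>I. card (SYT l (addb m i)))"
    by (rule card_SigmaI) (auto simp: I_def finite_SYT[OF vl])
  also have "\<dots> = (\<Sum>i<3. if valid (addb m i) \<and> contained (addb m i) l then card (SYT l (addb m i)) else 0)"
    unfolding I_def by (rule sum.inter_filter) simp
  finally show ?thesis .
qed



definition Sh :: "nat \<Rightarrow> (nat \<Rightarrow> nat) set" where
  "Sh n = {s. valid s \<and> ssize s = n}"

lemma finite_Sh: "finite (Sh n)"
proof -
  let ?f = "\<lambda>(a, b, c). (\<lambda>i::nat. if i = 0 then a else if i = 1 then b else if i = 2 then c else (0::nat))"
  have "Sh n \<subseteq> ?f ` ({..n} \<times> {..n} \<times> {..n})"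
  proof
    fix s assume s: "s \<in> Sh n"
    have "s = ?f (s 0, s 1, s 2)"
    proof
      fix i show "s i = ?f (s 0, s 1, s 2) i"
        using s by (auto simp: Sh_def valid_def)
    qed
    moreover have "(s 0, s 1, s 2) \<in> {..n} \<times> {..n} \<times> {..n}" using s by (auto simp: Sh_def ssize_def)
    ultimately show "s \<in> ?f ` ({..n} \<times> {..n} \<times> {..n})" by blast
  qed
  then show ?thesis by (rule finite_subset) simp
qed

lemma contained_eq:
  assumes "valid m" "valid l" "contained m l" "ssize l = ssize m"
  shows "l = m"
proof
  fix i
  show "l i = m i"
  proof (cases "i < 3")
    case True
    have "m 0 \<le> l 0" "m 1 \<le> l 1" "m 2 \<le> l 2" using assms(3) by (auto simp: contained_def)
    moreover have "i = 0 \<or> i = 1 \<or> i = 2" using True by arith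
    ultimately show ?thesis using assms(4) by (auto simp: ssize_def)
  next
    case False then show ?thesis using assms(1,2) by (simp add: valid_def)
  qed
qed

lemma ssize_addb: "i < 3 \<Longrightarrow> ssize (addb m i) = Suc (ssize m)"
proof -
  assume "i < 3"
  then have "i = 0 \<or> i = 1 \<or> i = 2" by arith
  then show ?thesis by (auto simp: ssize_def addb_def)
qed

lemma boxes_ne:
  assumes "contained m l" "ssize m < ssize l"
  shows "boxes l m \<noteq> {}"
proof -
  have "\<exists>i. m i < l i"
  proof (rule ccontr)
    assume "\<not> ?thesis"
    then have "l 0 \<le> m 0" "l 1 \<le> m 1" "l 2 \<le> m 2" by (auto simp: not_less)
    then show False using assms(2) by (simp add: ssize_def)
  qed
  then obtain i where "m i < l i" by blast
  then have "(i, m i) \<in> boxes l m" by (simp add: boxes_def)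
  then show ?thesis by blast
qed

lemma contained_addb: "contained (addb m i) l \<Longrightarrow> contained m l"
  unfolding contained_def addb_def
proof (intro allI)
  fix k assume h: "\<forall>j. (m(i := Suc (m i))) j \<le> l j"
  show "m k \<le> l k" using h[rule_format, of k] by (cases "k = i") auto
qed

lemma sum_SYT_G:
  "valid m \<Longrightarrow> (\<Sum>l\<in>Sh (ssize m + N). if contained m l then card (SYT l m) else 0) = G N m"
proof (induction N arbitrary: m)
  case 0
  have "(\<Sum>l\<in>Sh (ssize m). if contained m l then card (SYT l m) else 0)
      = (\<Sum>l\<in>Sh (ssize m). if l = m then 1 else 0)"
  proof (rule sum.cong[OF refl])
    fix l assume l: "l \<in> Sh (ssize m)"
    show "(if contained m l then card (SYT l m) else 0) = (if l = m then 1 else 0)"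
    proof (cases "contained m l")
      case True
      then have "l = m" using contained_eq[OF 0] l by (auto simp: Sh_def)
      then show ?thesis by (simp add: SYT_same contained_def)
    next
      case False
      then have "l \<noteq> m" by (auto simp: contained_def)
      then show ?thesis using False by simp
    qed
  qed
  also have "\<dots> = 1" using 0 finite_Sh by (simp add: Sh_def)
  finally show ?case by simp
next
  case (Suc N)
  have "(\<Sum>l\<in>Sh (ssize m + Suc N). if contained m l then card (SYT l m) else 0)
      = (\<Sum>l\<in>Sh (ssize m + Suc N). \<Sum>i<3. if valid (addb m i) then
            (if contained (addb m i) l then card (SYT l (addb m i)) else 0) else 0)"
  proof (rule sum.cong[OF refl])
    fix l assume l: "l \<in> Sh (ssize m + Suc N)"
    show "(if contained m l then card (SYT l m) else 0) = (\<Sum>i<3. if valid (addb m i) then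
            (if contained (addb m i) l then card (SYT l (addb m i)) else 0) else 0)"
    proof (cases "contained m l")
      case True
      have "boxes l m \<noteq> {}" using boxes_ne[OF True] l by (simp add: Sh_def)
      then have "card (SYT l m) = (\<Sum>i<3. if valid (addb m i) \<and> contained (addb m i) l then card (SYT l (addb m i)) else 0)"
        using card_SYT_rec[of l m] l Suc.prems True by (simp add: Sh_def)
      then show ?thesis using True by (auto intro!: sum.cong)
    next
      case False
      then show ?thesis using contained_addb by (auto intro!: sum.neutral)
    qed
  qed
  also have "\<dots> = (\<Sum>i<3. \<Sum>l\<in>Sh (ssize m + Suc N). if valid (addb m i) then
            (if contained (addb m i) l then card (SYT l (addb m i)) else 0) else 0)"
    by (rule sum.swap)
  also have "\<dots> = (\<Sum>i<3. if valid (addb m i) then G N (addb m i) else 0)"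
  proof (rule sum.cong[OF refl])
    fix i :: nat assume i: "i \<in> {..<3}"
    show "(\<Sum>l\<in>Sh (ssize m + Suc N). if valid (addb m i) then
            (if contained (addb m i) l then card (SYT l (addb m i)) else 0) else 0)
        = (if valid (addb m i) then G N (addb m i) else 0)"
    proof (cases "valid (addb m i)")
      case True
      have e: "ssize m + Suc N = ssize (addb m i) + N" using ssize_addb[of i m] i by simp
      show ?thesis unfolding e using Suc.IH[OF True] True by simp
    next
      case False then show ?thesis by simp
    qed
  qed
  finally show ?case by simp
qed



section \<open>Generating function\<close>

lemma r_gf_rec:
  defines "r \<equiv> r_gf"
  shows "fps_nth r 0 = 0" "fps_nth r 1 = 1" "fps_nth r 2 = fps_X * fps_nth r 1"
    "\<And>k. fps_nth r (k + 3) = fps_X * fps_nth r (k + 2) - fps_X * fps_nth r (k + 1) + fps_nth r k"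
proof -
  define Dd :: "real fps fps" where
    "Dd = (1 - fps_X) * (1 + fps_const (1 - fps_X) * fps_X + fps_X ^ 2)"
  define C :: "real fps fps" where "C = fps_const fps_X"
  have D0: "fps_nth Dd 0 = 1" by (simp add: Dd_def)
  have inv1: "inverse (1 :: real fps) = 1" by (rule fps_inverse_one') simp
  have iD: "inverse Dd = fps_right_inverse Dd 1" using fps_inverse_def[of Dd] by (simp only: D0 inv1)
  have "Dd * inverse Dd = 1"
    unfolding iD by (rule fps_right_inverse) (simp add: D0)
  then have DR: "Dd * r = fps_X" unfolding r_def r_gf_def Dd_def[symmetric]
    by (metis mult.left_commute mult.right_neutral)
  have cs: "fps_const (1 - fps_X) = (1::real fps fps) - fps_const fps_X"
    by (metis fps_const_1_eq_1 fps_const_sub)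
  have Dexp: "Dd = 1 - C * fps_X + C * fps_X^2 - fps_X^3"
    unfolding Dd_def C_def cs by (simp add: fps_const_sub power2_eq_square power3_eq_cube algebra_simps)
  have "fps_X = r - C * (fps_X * r) + C * (fps_X^2 * r) - fps_X^3 * r"
    using DR unfolding Dexp by (simp add: algebra_simps)
  then have eq: "\<And>n. fps_nth (fps_X :: real fps fps) n = fps_nth r n - fps_X * fps_nth (fps_X * r) n + fps_X * fps_nth (fps_X^2 * r) n - fps_nth (fps_X^3 * r) n"
    by (metis C_def fps_add_nth fps_sub_nth fps_mult_left_const_nth)
  have XP: "\<And>k n. fps_nth (fps_X ^ k * r) n = (if n < k then 0 else fps_nth r (n - k))"
    by (rule fps_X_power_mult_nth)
  have XP1: "\<And>n. fps_nth (fps_X * r) n = (if n = 0 then 0 else fps_nth r (n - 1))"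
    by (simp add: fps_X_mult_nth)
  show r0: "fps_nth r 0 = 0" using eq[of 0] XP XP1 by simp
  show r1: "fps_nth r 1 = 1" using eq[of 1] XP XP1 r0 by simp
  show "fps_nth r 2 = fps_X * fps_nth r 1" using eq[of 2] XP XP1 r0 by simp
  fix k
  show "fps_nth r (k + 3) = fps_X * fps_nth r (k + 2) - fps_X * fps_nth r (k + 1) + fps_nth r k"
    using eq[of "k+3"] XP[of 2 "k+3"] XP[of 3 "k+3"] XP1[of "k+3"] by (simp add: algebra_simps)
qed

lemma coeff_X_mult: "coeff (X * p) i = (if i = 0 then 0 else coeff p (i - 1))"
  by (simp add: X_mult coeff_pCons split: nat.split)

lemma coeff_X: "coeff X j = (if j = 1 then 1 else 0)"
  by (simp add: X_def coeff_pCons split: nat.split)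

lemma r_coeff_hn: "r_coeff (Suc m) i = real_of_int (coeff (hn m) i)"
proof (induction m arbitrary: i rule: less_induct)
  case (less m)
  note R = r_gf_rec
  have r1': "fps_nth r_gf (Suc 0) = 1" using R(2) by simp
  have Xn: "\<And>f :: real fps. fps_nth (fps_X * f) i = (if i = 0 then 0 else fps_nth f (i - 1))" for i
    by (simp add: fps_X_mult_nth)
  show ?case
  proof (cases m)
    case 0
    then show ?thesis by (simp add: r_coeff_def r1')
  next
    case (Suc m1)
    show ?thesis
    proof (cases m1)
      case 0
      have "fps_nth r_gf (Suc (Suc 0)) = fps_X" using R(2,3) by (simp add: numeral_2_eq_2)
      then show ?thesis using Suc 0 by (simp add: r_coeff_def X_def coeff_pCons split: nat.split)
    next
      case (Suc m2)
      show ?thesis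
      proof (cases m2)
        case 0
        have "fps_nth r_gf (Suc (Suc (Suc 0))) = fps_X * fps_X - fps_X"
          using R(1,2,3) R(4)[of 0] by (simp add: numeral_2_eq_2 numeral_3_eq_3)
        moreover have "hn m = X * X - X" using \<open>m = Suc m1\<close> Suc 0 by (simp add: power2_eq_square)
        ultimately show ?thesis using \<open>m = Suc m1\<close> Suc 0
          by (auto simp: r_coeff_def coeff_X_mult Xn coeff_X)
      next
        case (Suc k)
        have mm: "m = k + 3" using \<open>m = Suc m1\<close> \<open>m1 = Suc m2\<close> Suc by simp
        have hm: "hn m = X * hn (k + 2) - X * hn (k + 1) + hn k"
          using mm by (simp add: numeral_3_eq_3 numeral_2_eq_2)
        have rm: "fps_nth r_gf (Suc m) = fps_X * fps_nth r_gf (Suc (k + 2)) - fps_X * fps_nth r_gf (Suc (k + 1)) + fps_nth r_gf (Suc k)"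
          using R(4)[of "Suc k"] mm by (simp add: algebra_simps)
        have IH: "\<And>j i. j < m \<Longrightarrow> fps_nth (fps_nth r_gf (Suc j)) i = real_of_int (coeff (hn j) i)"
          using less by (simp add: r_coeff_def)
        show ?thesis
          unfolding r_coeff_def rm hm
          using IH[of "k+2"] IH[of "k+1"] IH[of k] mm
          by (simp add: coeff_X_mult Xn)
      qed
    qed
  qed
qed

lemma degree_hn: "degree (hn m) \<le> m"
proof (induction m rule: hn.induct)
  case 1 then show ?case by simp
next
  case 2 then show ?case by (simp add: X_def)
next
  case 3
  have "degree (X^2) \<le> 2" using degree_power_le[of X 2] by (simp add: X_def)
  moreover have "degree X \<le> 2" by (simp add: X_def)
  ultimately have "degree (X^2 - X) \<le> 2" by (meson degree_diff_le)
  then show ?case by (simp add: numeral_2_eq_2)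
next
  case (4 n)
  have dX: "degree (X * p) \<le> Suc (degree p)" for p
    by (simp add: X_mult degree_pCons_le)
  have a: "degree (X * hn (Suc (Suc n))) \<le> Suc (Suc (Suc n))" using 4 dX[of "hn (Suc (Suc n))"] by simp
  have b: "degree (X * hn (Suc n)) \<le> Suc (Suc (Suc n))" using 4 dX[of "hn (Suc n)"] by simp
  have c: "degree (hn n) \<le> Suc (Suc (Suc n))" using 4 by simp
  have "degree (X * hn (Suc (Suc n)) - X * hn (Suc n)) \<le> Suc (Suc (Suc n))"
    using a b by (meson degree_diff_le)
  then have "degree (X * hn (Suc (Suc n)) - X * hn (Suc n) + hn n) \<le> Suc (Suc (Suc n))"
    using c by (meson degree_add_le)
  then show ?case by (simp only: hn.simps)
qed

lemma coeff_Xpow_mult: "coeff (X^N * p) j = (if N \<le> j then coeff p (j - N) else 0)"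
proof (induction N arbitrary: j)
  case 0 then show ?case by simp
next
  case (Suc N)
  have "coeff (X^Suc N * p) j = coeff (X * (X^N * p)) j" by (simp add: algebra_simps)
  then show ?case using Suc by (cases j) (simp_all add: coeff_X_mult)
qed

lemma degree_Xpow_mult: "degree (X^N * p) \<le> N + degree p"
proof -
  have "degree (X^N) \<le> N" unfolding X_def by (rule order.trans[OF degree_power_le]) simp
  then show ?thesis using degree_mult_le[of "X^N" p] by simp
qed

lemma K_shift:
  assumes "degree p \<le> d"
  shows "K 0 (X^N * p) = (\<Sum>i\<le>d. coeff p i * W 0 (N + i))"
proof -
  define h where "h j = coeff (X^N * p) j * W 0 j" for j
  have "K 0 (X^N * p) = (\<Sum>j\<le>N + d. h j)"
    unfolding h_def using degree_Xpow_mult[of N p] assms by (intro K_bound) simp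
  also have "\<dots> = (\<Sum>j\<in>(\<lambda>i. N + i) ` {..d}. h j)"
  proof (rule sum.mono_neutral_right)
    show "\<forall>i\<in>{..N + d} - (+) N ` {..d}. h i = 0"
    proof
      fix i assume i: "i \<in> {..N + d} - (+) N ` {..d}"
      have "\<not> N \<le> i"
      proof
        assume "N \<le> i"
        then have "i \<in> (+) N ` {..d}" using i by (intro image_eqI[where x="i - N"]) auto
        then show False using i by blast
      qed
      then show "h i = 0" by (simp add: h_def coeff_Xpow_mult)
    qed
  qed auto
  also have "\<dots> = (\<Sum>i\<le>d. h (N + i))"
    by (rule sum.reindex_cong[where l="\<lambda>i. N + i"]) (auto simp: inj_on_def)
  finally show ?thesis by (simp add: h_def coeff_Xpow_mult)
qed



lemma skew_boxes_eq: "skew_boxes lam mu = boxes (part lam) (part mu)"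
  by (auto simp: skew_boxes_def boxes_def part_def split: if_splits)

lemma skew_SYT_eq: "skew_SYT lam mu = SYT (part lam) (part mu)"
  unfolding skew_SYT_def SYT_def skew_boxes_eq ..

lemma len3_cases:
  assumes "length xs \<le> 3"
  obtains "xs = []" | a where "xs = [a]" | a b where "xs = [a, b]" | a b c where "xs = [a, b, c]"
proof -
  consider (0) "length xs = 0" | (1) "length xs = 1" | (2) "length xs = 2" | (3) "length xs = 3"
    using assms by linarith
  then show ?thesis
  proof cases
    case 0 then show ?thesis using that(1) by simp
  next
    case 1 then show ?thesis using that(2) by (metis length_0_conv length_Suc_conv One_nat_def)
  next
    case 2 then show ?thesis using that(3)
      by (metis length_0_conv length_Suc_conv numeral_2_eq_2)
  next
    case 3 then show ?thesis using that(4)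
      by (metis length_0_conv length_Suc_conv numeral_3_eq_3)
  qed
qed

lemma part_Sh:
  assumes "lam \<in> partitions_at_most3 n"
  shows "part lam \<in> Sh n"
proof -
  have len: "length lam \<le> 3" and s: "sum_list lam = n" and p: "is_partition lam"
    using assms by (auto simp: partitions_at_most3_def)
  have sw: "sorted_wrt (\<ge>) lam" using p by (simp add: is_partition_def)
  from len show ?thesis
  proof (cases rule: len3_cases)
    case 1 then show ?thesis using s by (simp add: Sh_def valid_def ssize_def part_def)
  next
    case (2 a) then show ?thesis using s by (simp add: Sh_def valid_def ssize_def part_def)
  next
    case (3 a b) then show ?thesis using s sw by (simp add: Sh_def valid_def ssize_def part_def)
  next
    case (4 a b c) then show ?thesis using s sw by (simp add: Sh_def valid_def ssize_def part_def)
  qed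
qed

lemma part_pos: "is_partition lam \<Longrightarrow> i < length lam \<Longrightarrow> 0 < part lam i"
  by (simp add: is_partition_def part_def)

lemma inj_part: "inj_on part {lam. is_partition lam}"
proof (rule inj_onI)
  fix l1 l2 assume l1: "l1 \<in> {lam. is_partition lam}" and l2: "l2 \<in> {lam. is_partition lam}"
    and e: "part l1 = part l2"
  have "length l1 = length l2"
  proof (rule ccontr)
    assume "length l1 \<noteq> length l2"
    then consider "length l1 < length l2" | "length l2 < length l1" by linarith
    then show False
    proof cases
      case 1
      then have "0 < part l2 (length l1)" using part_pos l2 by simp
      then show False using fun_cong[OF e, of "length l1"] by (simp add: part_def)
    next
      case 2
      then have "0 < part l1 (length l2)" using part_pos l1 by simp
      then show False using fun_cong[OF e, of "length l2"] by (simp add: part_def)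
    qed
  qed
  moreover have "\<And>i. i < length l1 \<Longrightarrow> l1 ! i = l2 ! i"
    using e calculation by (metis part_def)
  ultimately show "l1 = l2" by (rule nth_equalityI)
qed

definition lof :: "(nat \<Rightarrow> nat) \<Rightarrow> nat list" where
  "lof l = (if l 0 = 0 then [] else if l 1 = 0 then [l 0] else if l 2 = 0 then [l 0, l 1] else [l 0, l 1, l 2])"

lemma part0: "part [] i = 0" by (simp add: part_def)
lemma part1: "part [a] i = (if i = 0 then a else 0)" by (simp add: part_def)
lemma part2: "part [a, b] i = (if i = 0 then a else if i = 1 then b else 0)"
  by (cases i) (auto simp: part_def)
lemma part3: "part [a, b, c] i = (if i = 0 then a else if i = 1 then b else if i = 2 then c else 0)"
proof (cases i)
  case (Suc j) then show ?thesis by (cases j) (auto simp: part_def numeral_2_eq_2)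
qed (simp add: part_def)

lemma lof_part:
  assumes "valid l"
  shows "part (lof l) = l"
proof
  fix i :: nat
  have v: "l 1 \<le> l 0" "l 2 \<le> l 1" "\<And>i. i \<ge> 3 \<Longrightarrow> l i = 0" using assms by (auto simp: valid_def)
  have "i = 0 \<or> i = 1 \<or> i = 2 \<or> i \<ge> 3" by arith
  then show "part (lof l) i = l i"
  proof -
    consider "l 0 = 0" | "l 0 \<noteq> 0" "l 1 = 0" | "l 0 \<noteq> 0" "l 1 \<noteq> 0" "l 2 = 0"
      | "l 0 \<noteq> 0" "l 1 \<noteq> 0" "l 2 \<noteq> 0" by blast
    then show ?thesis
    proof cases
      case 1 then have "l 1 = 0" "l 2 = 0" using v by auto
      then show ?thesis using 1 \<open>i = 0 \<or> i = 1 \<or> i = 2 \<or> i \<ge> 3\<close> v(3)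
        by (auto simp: lof_def part0)
    next
      case 2 then have "l 2 = 0" using v by auto
      then show ?thesis using 2 \<open>i = 0 \<or> i = 1 \<or> i = 2 \<or> i \<ge> 3\<close> v(3)
        by (auto simp: lof_def part1)
    next
      case 3 then show ?thesis using \<open>i = 0 \<or> i = 1 \<or> i = 2 \<or> i \<ge> 3\<close> v(3)
        by (auto simp: lof_def part2)
    next
      case 4 then show ?thesis using \<open>i = 0 \<or> i = 1 \<or> i = 2 \<or> i \<ge> 3\<close> v(3)
        by (auto simp: lof_def part3)
    qed
  qed
qed

lemma lof_partition:
  assumes "l \<in> Sh n"
  shows "lof l \<in> partitions_at_most3 n"
proof -
  have v: "l 1 \<le> l 0" "l 2 \<le> l 1" and s: "l 0 + l 1 + l 2 = n" using assms by (auto simp: Sh_def valid_def ssize_def)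
  consider "l 0 = 0" | "l 0 \<noteq> 0" "l 1 = 0" | "l 0 \<noteq> 0" "l 1 \<noteq> 0" "l 2 = 0"
      | "l 0 \<noteq> 0" "l 1 \<noteq> 0" "l 2 \<noteq> 0" by blast
  then show ?thesis
  proof cases
    case 1 then show ?thesis using v s by (simp add: lof_def partitions_at_most3_def is_partition_def)
  next
    case 2 then show ?thesis using v s by (simp add: lof_def partitions_at_most3_def is_partition_def)
  next
    case 3 then show ?thesis using v s by (simp add: lof_def partitions_at_most3_def is_partition_def)
  next
    case 4 then show ?thesis using v s by (simp add: lof_def partitions_at_most3_def is_partition_def)
  qed
qed

theorem theorem2p1:
  fixes k n :: nat
  assumes "1 \<le> k" and "k - 1 \<le> n"
  shows "real (\<Sum>lam \<in> {lam \<in> partitions_at_most3 n. part_contains ((if k = 1 then [] else [k - 1])) lam}.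
                 card (skew_SYT lam ((if k = 1 then [] else [k - 1]))))
         = (\<Sum>i = 0..k - 1. r_coeff k i * real (motzkin (i + (n + 1 - k))))"
proof -
  define mu where "mu = (if k = 1 then [] else [k - 1])"
  define m0 where "m0 = (\<lambda>i::nat. if i = 0 then k - 1 else 0)"
  define A where "A = {lam \<in> partitions_at_most3 n. part_contains mu lam}"
  define N where "N = n + 1 - k"
  have pm: "part mu = m0" using assms by (auto simp: mu_def m0_def part_def)
  have vm0: "valid m0" by (simp add: m0_def valid_def)
  have sm0: "ssize m0 + N = n" using assms by (simp add: m0_def ssize_def N_def)
  have pc: "part_contains mu lam \<longleftrightarrow> contained m0 (part lam)" for lam
  proof (cases "k = 1")
    case True then show ?thesis by (simp add: mu_def m0_def part_contains_def contained_def)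
  next
    case False
    have c1: "contained m0 (part lam) \<longleftrightarrow> k - 1 \<le> part lam 0"
      unfolding contained_def m0_def by (metis le0)
    have c2: "part_contains mu lam \<longleftrightarrow> (0 < length lam \<and> k - 1 \<le> lam ! 0)"
      using False by (simp add: mu_def part_contains_def Suc_le_eq)
    have k2: "1 \<le> k - 1" using False assms by simp
    show ?thesis unfolding c1 c2 part_def using k2 by auto
  qed
  have injA: "inj_on part A"
    by (rule inj_on_subset[OF inj_part]) (auto simp: A_def partitions_at_most3_def)
  have imgA: "part ` A = {l \<in> Sh n. contained m0 l}"
  proof
    show "part ` A \<subseteq> {l \<in> Sh n. contained m0 l}"
      using part_Sh pc by (auto simp: A_def)
  next
    show "{l \<in> Sh n. contained m0 l} \<subseteq> part ` A"
    proof
      fix l assume l: "l \<in> {l \<in> Sh n. contained m0 l}"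
      then have vl: "valid l" by (simp add: Sh_def)
      have "lof l \<in> A" using l lof_partition lof_part[OF vl] pc by (auto simp: A_def)
      then show "l \<in> part ` A" using lof_part[OF vl] by (metis image_eqI)
    qed
  qed
  have "(\<Sum>lam\<in>A. card (skew_SYT lam mu)) = (\<Sum>lam\<in>A. card (SYT (part lam) m0))"
    by (simp add: skew_SYT_eq pm)
  also have "\<dots> = (\<Sum>l\<in>part ` A. card (SYT l m0))"
    by (rule sum.reindex[OF injA, symmetric, unfolded comp_def])
  also have "\<dots> = (\<Sum>l\<in>Sh n. if contained m0 l then card (SYT l m0) else 0)"
    unfolding imgA by (rule sum.inter_filter[OF finite_Sh])
  also have "\<dots> = G N m0" using sum_SYT_G[OF vm0, of N] sm0 by simp
  finally have L: "(\<Sum>lam\<in>A. card (skew_SYT lam mu)) = G N m0" .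
  have P: "PolS m0 = hn (k - 1)" by (simp add: PolS_def m0_def Pol_def hi_def)
  have "int (G N m0) = K 0 (X^N * hn (k - 1))" using G_K[OF vm0, of N] P by simp
  also have "\<dots> = (\<Sum>i\<le>k - 1. coeff (hn (k - 1)) i * W 0 (N + i))"
    by (rule K_shift[OF degree_hn])
  also have "\<dots> = (\<Sum>i\<le>k - 1. coeff (hn (k - 1)) i * int (motzkin (N + i)))"
    by (simp only: W0_motzkin)
  finally have "real_of_int (int (G N m0)) = real_of_int (\<Sum>i\<le>k - 1. coeff (hn (k - 1)) i * int (motzkin (N + i)))"
    by (rule arg_cong)
  then have R: "real (G N m0) = (\<Sum>i\<le>k - 1. real_of_int (coeff (hn (k - 1)) i) * real (motzkin (N + i)))"
    by (simp only: of_int_sum of_int_mult of_int_of_nat_eq)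
  have kk: "Suc (k - 1) = k" using assms by simp
  have "(\<Sum>i = 0..k - 1. r_coeff k i * real (motzkin (i + N)))
      = (\<Sum>i\<le>k - 1. real_of_int (coeff (hn (k - 1)) i) * real (motzkin (N + i)))"
    unfolding atLeast0AtMost
  proof (rule sum.cong[OF refl])
    fix i show "r_coeff k i * real (motzkin (i + N)) = real_of_int (coeff (hn (k - 1)) i) * real (motzkin (N + i))"
      using r_coeff_hn[of "k - 1" i] kk by (simp add: add.commute)
  qed
  then show ?thesis
    unfolding mu_def[symmetric] A_def[symmetric] N_def[symmetric] L R by simp
qed


end
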